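(* Under the standing assumptions below, the relation $\preceq$ is a total order on $I$.
   Context: Standing assumptions: $I$ is a finite set of weighted constraints with default values on a finite domain $D$ (each constraint $c$ has a finite variable set $\mathrm{var}(c)$) such that distinct constraints have distinct variable sets, the hypergraph $\mathcal H(I)=(\mathrm{var}(I),\{\mathrm{var}(c)\mid c\in I\})$ is $\beta$-acyclic, and $(x_1,\dots,x_n)$ is a $\beta$-elimination order of $\mathcal H(I)$ (an enumeration of $\mathrm{var}(I)$ such that, for each $k$, $x_{k+1}$ is a nest point—i.e. the edges containing it are totally ordered by inclusion—of the hypergraph with vertices $\mathrm{var}(I)\setminus X_k$ and edges $\{e\setminus X_k\}\setminus\{\emptyset\}$). Let $X_k=\{x_1,\dots,x_k\}$ ($X_0=\emptyset$). For $c,d\in I$, write $c\prec d$ if there exists $k\in\{0,\dots,n\}$ with $\mathrm{var}(c)\setminus X_k\subsetneq\mathrm{var}(d)\setminus X_k$, and $c\preceq d$ if $c\prec d$ or $c=d$. *)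

theory Defs
  imports Main
begin

definition edges_of :: "('c \<Rightarrow> 'v set) \<Rightarrow> 'c set \<Rightarrow> 'v set set" where
  "edges_of var I = var ` I"

definition vars_of :: "('c \<Rightarrow> 'v set) \<Rightarrow> 'c set \<Rightarrow> 'v set" where
  "vars_of var I = \<Union> (var ` I)"

definition nest_point :: "'v set set \<Rightarrow> 'v \<Rightarrow> bool" where
  "nest_point E v \<longleftrightarrow> (\<forall>e\<in>E. \<forall>f\<in>E. v \<in> e \<and> v \<in> f \<longrightarrow> e \<subseteq> f \<or> f \<subseteq> e)"

definition remove_vertices :: "'v set set \<Rightarrow> 'v set \<Rightarrow> 'v set set" where
  "remove_vertices E X = (\<lambda>e. e - X) ` E - {{}}"

definition beta_elim_order :: "'v set \<Rightarrow> 'v set set \<Rightarrow> 'v list \<Rightarrow> bool" where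
  "beta_elim_order V E xs \<longleftrightarrow> distinct xs \<and> set xs = V \<and>
     (\<forall>k < length xs. xs ! k \<in> V - set (take k xs) \<and>
        nest_point (remove_vertices E (set (take k xs))) (xs ! k))"

definition beta_acyclic :: "'v set \<Rightarrow> 'v set set \<Rightarrow> bool" where
  "beta_acyclic V E \<longleftrightarrow> (\<exists>xs. beta_elim_order V E xs)"

definition prec :: "('c \<Rightarrow> 'v set) \<Rightarrow> 'v list \<Rightarrow> 'c \<Rightarrow> 'c \<Rightarrow> bool" where
  "prec var xs c d \<longleftrightarrow> (\<exists>k \<le> length xs. var c - set (take k xs) \<subset> var d - set (take k xs))"

definition preceq_rel :: "('c \<Rightarrow> 'v set) \<Rightarrow> 'v list \<Rightarrow> 'c set \<Rightarrow> ('c \<times> 'c) set" where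
  "preceq_rel var xs I = {(c, d). c \<in> I \<and> d \<in> I \<and> (prec var xs c d \<or> c = d)}"

end

theory Submission
  imports Defs
begin

lemma mono_diff:
  assumes "A - set (take k xs) \<subseteq> B - set (take k xs)" "k \<le> k'"
  shows "A - set (take k' xs) \<subseteq> B - set (take k' xs)"
proof -
  have "set (take k xs) \<subseteq> set (take k' xs)" using assms(2) by (rule set_take_subset_set_take)
  thus ?thesis using assms(1) by blast
qed

lemma last_step:
  fixes a b :: nat
  shows "P a \<Longrightarrow> \<not> P b \<Longrightarrow> a \<le> b \<Longrightarrow> \<exists>k. a \<le> k \<and> k < b \<and> P k \<and> \<not> P (Suc k)"
proof (induction b)
  case 0 then show ?case by auto
next
  case (Suc b)
  show ?case
  proof (cases "P b")
    case True
    then show ?thesis using Suc by (metis le_SucE lessI)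
  next
    case False
    then have "a \<le> b" using Suc by (metis le_SucE)
    then show ?thesis using Suc.IH Suc.prems False by (meson less_SucI)
  qed
qed

lemma take_Suc_set:
  "k < length xs \<Longrightarrow> set (take (Suc k) xs) = insert (xs ! k) (set (take k xs))"
  by (simp add: take_Suc_conv_app_nth)

lemma last_strict:
  assumes "A - set (take k xs) \<subset> B - set (take k xs)" "k \<le> length xs"
    "A \<subseteq> set xs" "B \<subseteq> set xs"
  shows "\<exists>k'. k \<le> k' \<and> k' < length xs \<and> A - set (take k' xs) \<subset> B - set (take k' xs)
     \<and> A - set (take (Suc k') xs) = B - set (take (Suc k') xs)"
proof -
  let ?P = "\<lambda>i. A - set (take i xs) \<noteq> B - set (take i xs)"
  have "?P k" using assms(1) by blast
  moreover have "\<not> ?P (length xs)" using assms(3,4) by auto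
  ultimately obtain k' where k': "k \<le> k'" "k' < length xs" "?P k'" "\<not> ?P (Suc k')"
    using last_step[of ?P k "length xs"] assms(2) by blast
  have "A - set (take k' xs) \<subseteq> B - set (take k' xs)"
    using mono_diff[of A k xs B k'] assms(1) k'(1) by blast
  then show ?thesis using k' by blast
qed

lemma eq_after:
  assumes "A - set (take k xs) = B - set (take k xs)" "k \<le> k'"
  shows "A - set (take k' xs) = B - set (take k' xs)"
  using mono_diff[of A k xs B k'] mono_diff[of B k xs A k'] assms by blast

lemma psub_step: "A \<subset> B \<Longrightarrow> A - {x} = B - {x} \<Longrightarrow> x \<in> B \<and> x \<notin> A"
  by blast

theorem lemma3:
  fixes I :: "'c set" and var :: "'c \<Rightarrow> 'v set" and xs :: "'v list"
  assumes "finite I"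
    and "\<forall>c\<in>I. finite (var c)"
    and "inj_on var I"
    and "beta_acyclic (vars_of var I) (edges_of var I)"
    and "beta_elim_order (vars_of var I) (edges_of var I) xs"
  shows "linear_order_on I (preceq_rel var xs I)"
proof -
  let ?T = "\<lambda>k. set (take k xs)"
  have sub: "\<And>c. c \<in> I \<Longrightarrow> var c \<subseteq> set xs"
    using assms(5) unfolding beta_elim_order_def vars_of_def by auto
  have lastk: "\<exists>k. k < length xs \<and> var c - ?T k \<subset> var d - ?T k
       \<and> var c - ?T (Suc k) = var d - ?T (Suc k)"
    if h: "c \<in> I" "d \<in> I" "prec var xs c d" for c d
  proof -
    obtain k where "k \<le> length xs" "var c - ?T k \<subset> var d - ?T k"
      using h(3) unfolding prec_def by blast
    then show ?thesis using last_strict[of "var c" k xs "var d"] sub h(1,2) by blast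
  qed
  have antis: "False" if h: "c \<in> I" "d \<in> I" "prec var xs c d" "prec var xs d c" for c d
  proof -
    obtain k where k: "var c - ?T k \<subset> var d - ?T k" using h(3) unfolding prec_def by blast
    obtain j where j: "var d - ?T j \<subset> var c - ?T j" using h(4) unfolding prec_def by blast
    show False
    proof (cases "k \<le> j")
      case True
      then show ?thesis using mono_diff[of "var c" k xs "var d" j] k j by blast
    next
      case False
      then show ?thesis using mono_diff[of "var d" j xs "var c" k] k j by auto
    qed
  qed
  have tot: "prec var xs c d \<or> prec var xs d c" if h: "c \<in> I" "d \<in> I" "c \<noteq> d" for c d
  proof -
    have ne: "var c \<noteq> var d" using assms(3) h by (meson inj_on_def)
    let ?P = "\<lambda>i. var c - ?T i \<noteq> var d - ?T i"
    have "?P 0" using ne by simp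
    moreover have "\<not> ?P (length xs)" using sub h(1,2) by auto
    ultimately obtain k where k: "k < length xs" "?P k" "\<not> ?P (Suc k)"
      using last_step[of ?P 0 "length xs"] by blast
    have eq: "var c - ?T k - {xs ! k} = var d - ?T k - {xs ! k}"
      using k(3) take_Suc_set[OF k(1)] by (metis Diff_insert)
    have "var c - ?T k \<subset> var d - ?T k \<or> var d - ?T k \<subset> var c - ?T k"
      using eq k(2) by blast
    then show ?thesis unfolding prec_def using k(1) by (meson less_imp_le)
  qed
  have trans: "prec var xs c e \<or> c = e"
    if h: "c \<in> I" "d \<in> I" "e \<in> I" "prec var xs c d" "prec var xs d e" for c d e
  proof -
    obtain k1 where k1: "k1 < length xs" "var c - ?T k1 \<subset> var d - ?T k1"
      "var c - ?T (Suc k1) = var d - ?T (Suc k1)" using lastk h by blast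
    obtain k2 where k2: "k2 < length xs" "var d - ?T k2 \<subset> var e - ?T k2"
      "var d - ?T (Suc k2) = var e - ?T (Suc k2)" using lastk h by blast
    consider "k2 < k1" | "k1 < k2" | "k1 = k2" by linarith
    then show ?thesis
    proof cases
      case 1
      then have "var d - ?T k1 = var e - ?T k1" using eq_after[OF k2(3)] by simp
      then show ?thesis using k1 unfolding prec_def by (metis less_imp_le)
    next
      case 2
      then have "var c - ?T k2 = var d - ?T k2" using eq_after[OF k1(3)] by simp
      then show ?thesis using k2 unfolding prec_def by (metis less_imp_le)
    next
      case 3
      have e1: "var c - ?T k1 - {xs ! k1} = var d - ?T k1 - {xs ! k1}"
        using k1(3) take_Suc_set[OF k1(1)] by (metis Diff_insert)
      have e2: "var d - ?T k1 - {xs ! k1} = var e - ?T k1 - {xs ! k1}"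
        using k2(3) take_Suc_set[OF k2(1)] 3 by (metis Diff_insert)
      have x1: "xs ! k1 \<in> var d - ?T k1" "xs ! k1 \<notin> var c - ?T k1"
        using k1(2) e1 by (metis psub_step)+
      have x2: "xs ! k1 \<notin> var d - ?T k1"
        using k2(2) e2 3 by (metis psub_step)
      show ?thesis using x1 x2 by blast
    qed
  qed
  show ?thesis
    unfolding linear_order_on_def partial_order_on_def preorder_on_def
  proof (intro conjI)
    show "preceq_rel var xs I \<subseteq> I \<times> I"
      unfolding preceq_rel_def by auto
    show "refl_on I (preceq_rel var xs I)"
      unfolding refl_on_def preceq_rel_def by auto
    show "trans (preceq_rel var xs I)"
      unfolding trans_def preceq_rel_def using trans by blast
    show "antisym (preceq_rel var xs I)"
      unfolding antisym_def preceq_rel_def using antis by blast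
    show "total_on I (preceq_rel var xs I)"
      unfolding total_on_def preceq_rel_def using tot by blast
  qed
qed

end
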